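(* Consider the faulty system, the neural-network-based observer with mirror-descent last-layer adaptation, and the Lyapunov function $V$ described in the context. Suppose Assumptions A1, A2, A3 of the context hold, and that $\sigma_\mathrm{a},\sigma_\mathrm{s}>0$ are chosen such that, along the trajectories of the system and observer, $\dot V\le -\alpha_V V+\sigma$ for some constants $\alpha_V>0$ and $\sigma>0$. Then the state estimation error $e(t)=x(t)-\hat x(t)$ and the weight errors $\tilde W_\mathrm{a}(t)=W_\mathrm{a}^*-W_\mathrm{a}(t)$, $\tilde W_\mathrm{s}(t)=W_\mathrm{s}^*-W_\mathrm{s}(t)$ are uniformly ultimately bounded. Moreover, $e(t)$ converges exponentially to a residual set of size determined by $\sigma/\alpha_V$.
   Context: System: $\dot x=f(x)+g(x)u+\sum_{i} g_i^{\mathrm f}(x)f_{\mathrm{a},i}(t)+d(t)$, $y=h(x)+\sum_j e_jf_{\mathrm{s},j}(t)$, with $x\in\mathbb{R}^n$, $u\in\mathbb{R}^m$, $y\in\mathbb{R}^p$, $g(x)=[g_1(x)\cdots g_m(x)]$, smooth maps, and bounded disturbance $\|d(t)\|<\bar d$. Write $f_\mathrm{a}=[f_{\mathrm{a},1},\dots,f_{\mathrm{a},m}]^\top$ and $f_\mathrm{s}=\sum_je_jf_{\mathrm{s},j}$. Observer: $\dot{\hat x}=f(\hat x)+g(\hat x)u+g(\hat x)\hat f_\mathrm{a}(\hat x,u)+L(y-\hat y)$, $\hat y=h(\hat x)+\hat f_\mathrm{s}(\hat x,u)$, with gain $L$, $\hat f_\mathrm{a}=W_\mathrm{a}^\top\phi_\mathrm{a}(\hat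 x,u)\in\mathbb{R}^m$, $\hat f_\mathrm{s}=W_\mathrm{s}^\top\phi_\mathrm{s}(\hat x,u)\in\mathbb{R}^p$, $W_\mathrm{a}\in\mathbb{R}^{n_\mathrm{a}\times m}$, $W_\mathrm{s}\in\mathbb{R}^{n_\mathrm{s}\times p}$, and smooth feature maps $\phi_\mathrm{a},\phi_\mathrm{s}$ (fixed, pretrained hidden layers). A1: there exist unknown bounded ideal weights $W_\mathrm{a}^*,W_\mathrm{s}^*$ with $f_\mathrm{a}=W_\mathrm{a}^{*\top}\phi_\mathrm{a}(x,u)+\varepsilon_\mathrm{a}(t)$, $f_\mathrm{s}=W_\mathrm{s}^{*\top}\phi_\mathrm{s}(x,u)+\varepsilon_\mathrm{s}(t)$, $\|\varepsilon_\mathrm{a}\|\le\bar\varepsilon_\mathrm{a}$, $\|\varepsilon_\mathrm{s}\|\le\bar\varepsilon_\mathrm{s}$, and $\phi_\mathrm{a},\phi_\mathrm{s}$ are Lipschitz in the state: $\|\phi_\mathrm{a}(x,u)-\phi_\mathrm{a}(\hat x,u)\|\le L^e_{\phi_\mathrm{a}}\|x-\hat x\|$, similarly for $\phi_\mathrm{s}$. A2: with $A_\mathrm{L}(x)=\frac{\partial f}{\partial x}(x)+\sum_k\frac{\partial g_k}{\partial x}(x)u_k-L\frac{\partial h}{\partial x}(x)$, there exist a smooth metric $M(x)=M(x)^\top\succ0$ with $\underline mI\preceq M\preceq\bar mI$ and $\lambda>0$ such that $\dot M+A_\mathrm{L}^\top M+MA_\mathrm{L}\preceq-2\lambda M$.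 A3: $f,g,h$ are locally Lipschitz on a compact set containing $(x(t),\hat x(t),u(t))$ for all $t\ge0$. Mirror maps: $\psi_\mathrm{a},\psi_\mathrm{s}$ are elastic-net maps $\psi(W)=\frac{\beta}{2}\langle W,\Xi W\rangle+\alpha\sum_{j}\sqrt{\|w_{(:,j)}\|_2^2+\varepsilon}$ ($\beta,\alpha,\varepsilon>0$, $\Xi$ positive diagonal, $w_{(:,j)}$ the columns of $W$); their Bregman divergence is $D_\psi(\omega\|\omega^* )=\psi(\omega)-\psi(\omega^* )-\langle\nabla\psi(\omega^* ),\omega-\omega^*\rangle$, and $K_{\mathrm{a},i},K_{\mathrm{s},j}$ denote the diagonal (column) blocks of the Hessians $\nabla^2\psi_\mathrm{a}(W_\mathrm{a})$, $\nabla^2\psi_\mathrm{s}(W_\mathrm{s})$. Let $r=y-\hat y$ and $z=g(\hat x)^\top M(\hat x)Lr$. Adaptive laws (columns $w_{\mathrm{a},i},w_{\mathrm{s},j}$): $\dot w_{\mathrm{a},i}=-\gamma_{\mathrm{a},i}K_{\mathrm{a},i}^{-1}\phi_\mathrm{a}(\hat x,u)z_i-\sigma_\mathrm{a}w_{\mathrm{a},i}$, $\dot w_{\mathrm{s},j}=\gamma_{\mathrm{s},j}K_{\mathrm{s},j}^{-1}\phi_\mathrm{s}(\hat x,u)r_j-\sigma_\mathrm{s}w_{\mathrm{s},j}$, where $\gamma_{\mathrm{a},i},\gamma_{\mathrm{s},j}>0$ are the diagonal entries of the gain matrices $\Gamma_\mathrm{a},\Gamma_\mathrm{s}$ and $\sigma_\mathrm{a},\sigma_\mathrm{s}>0$.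 Lyapunov function: $V=\frac12e^\top M(\hat x)e+\sum_{i=1}^m\frac{1}{\gamma_{\mathrm{a},i}}D_{\psi_\mathrm{a}}(w^*_{\mathrm{a},i}\|w_{\mathrm{a},i})+\sum_{j=1}^p\frac{1}{\gamma_{\mathrm{s},j}}D_{\psi_\mathrm{s}}(w^*_{\mathrm{s},j}\|w_{\mathrm{s},j})$, with $w^*_{\mathrm{a},i},w^*_{\mathrm{s},j}$ the columns of $W_\mathrm{a}^*,W_\mathrm{s}^*$. *)

theory Defs
  imports "HOL-Analysis.Analysis"
begin

definition psd_le :: "real^'n^'n \<Rightarrow> real^'n^'n \<Rightarrow> bool" where
  "psd_le A B \<longleftrightarrow> (\<forall>v. v \<bullet> (A *v v) \<le> v \<bullet> (B *v v))"

definition diagm :: "real^'k \<Rightarrow> real^'k^'k" where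
  "diagm \<xi> = (\<chi> i j. if i = j then \<xi> $ i else 0)"

definition enet_map :: "real \<Rightarrow> real \<Rightarrow> real \<Rightarrow> real^'k \<Rightarrow> real^'c^'k \<Rightarrow> real" where
  "enet_map \<beta> \<alpha> \<epsilon> \<xi> W =
     \<beta> / 2 * (\<Sum>k\<in>UNIV. \<Sum>j\<in>UNIV. W $ k $ j * ((diagm \<xi> ** W) $ k $ j))
     + \<alpha> * (\<Sum>j\<in>UNIV. sqrt ((norm (column j W))\<^sup>2 + \<epsilon>))"

definition enet_col :: "real \<Rightarrow> real \<Rightarrow> real \<Rightarrow> real^'k \<Rightarrow> real^'k \<Rightarrow> real" where
  "enet_col \<beta> \<alpha> \<epsilon> \<xi> w = \<beta> / 2 * (w \<bullet> (diagm \<xi> *v w)) + \<alpha> * sqrt ((norm w)\<^sup>2 + \<epsilon>)"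

definition bregman :: "('a::real_normed_vector \<Rightarrow> real) \<Rightarrow> 'a \<Rightarrow> 'a \<Rightarrow> real" where
  "bregman \<psi> \<omega> \<omega>' = \<psi> \<omega> - \<psi> \<omega>' - frechet_derivative \<psi> (at \<omega>') (\<omega> - \<omega>')"

definition hessian :: "(real^'k \<Rightarrow> real) \<Rightarrow> real^'k \<Rightarrow> real^'k^'k" where
  "hessian \<psi> w = jacobian (\<lambda>v. \<chi> k. frechet_derivative \<psi> (at v) (axis k 1)) (at w)"

definition col_upd :: "real^'c^'k \<Rightarrow> 'c \<Rightarrow> real^'k \<Rightarrow> real^'c^'k" where
  "col_upd W j v = (\<chi> k i. if i = j then v $ k else W $ k $ i)"

definition hess_block :: "(real^'c^'k \<Rightarrow> real) \<Rightarrow> real^'c^'k \<Rightarrow> 'c \<Rightarrow> real^'k^'k" where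
  "hess_block \<psi> W j = hessian (\<lambda>v. \<psi> (col_upd W j v)) (column j W)"

definition lyap ::
  "(real^'n \<Rightarrow> real^'n^'n) \<Rightarrow> real^'n \<Rightarrow> real^'n
   \<Rightarrow> (real^'na \<Rightarrow> real) \<Rightarrow> real^'m \<Rightarrow> real^'m^'na \<Rightarrow> real^'m^'na
   \<Rightarrow> (real^'ns \<Rightarrow> real) \<Rightarrow> real^'p \<Rightarrow> real^'p^'ns \<Rightarrow> real^'p^'ns \<Rightarrow> real" where
  "lyap M e xh \<psi>a \<gamma>a Wastar Wa \<psi>s \<gamma>s Wsstar Ws =
     1/2 * (e \<bullet> (M xh *v e))
     + (\<Sum>i\<in>UNIV. 1 / \<gamma>a $ i * bregman \<psi>a (column i Wastar) (column i Wa))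
     + (\<Sum>j\<in>UNIV. 1 / \<gamma>s $ j * bregman \<psi>s (column j Wsstar) (column j Ws))"

end

theory Submission
  imports Defs
begin

lemma diag_mv: "(diagm \<xi> *v b) $ i = \<xi>$i * (b::real^'k)$i"
  unfolding diagm_def matrix_vector_mult_def
  by (simp add: if_distrib[of "\<lambda>c. c * _"] sum.delta cong: if_cong)
lemma diag_inner: "(a::real^'k) \<bullet> (diagm \<xi> *v b) = (\<Sum>i\<in>UNIV. \<xi>$i * a$i * b$i)"
  unfolding inner_vec_def diag_mv by (simp add: mult.assoc mult.left_commute)
lemma enet_alt: "enet_col \<beta> \<alpha> \<epsilon> \<xi> = (\<lambda>w. \<beta>/2 * (\<Sum>i\<in>UNIV. \<xi>$i * w$i * w$i) + \<alpha> * sqrt (w \<bullet> w + \<epsilon>))"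
  unfolding enet_col_def diag_inner by (simp add: power2_norm_eq_inner)
lemma enet_deriv: "(enet_col \<beta> \<alpha> \<epsilon> \<xi> has_derivative
   (\<lambda>w. \<beta> * (\<Sum>i\<in>UNIV. 2 * (w $ i * (\<xi> $ i * w' $ i))) / 2 +
          \<alpha> * ((w' \<bullet> w + w \<bullet> w') * inverse (sqrt (w' \<bullet> w' + \<epsilon>))) / 2)) (at (w'::real^'k))"
  if "\<epsilon> > 0"
proof -
  have p: "0 < w' \<bullet> w' + \<epsilon>" using that by (simp add: add_nonneg_pos)
  show ?thesis unfolding enet_alt
  apply (rule derivative_eq_intros refl bounded_linear.has_derivative[OF bounded_linear_vec_nth] bounded_linear.has_derivative[OF bounded_linear_ident] | simp add: p)+
  done
qed


lemma sqrt_tangent: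
  fixes w w' :: "real^'k"
  assumes "\<epsilon> > 0"
  shows "sqrt (w' \<bullet> w' + \<epsilon>) + (w' \<bullet> (w - w')) / sqrt (w' \<bullet> w' + \<epsilon>) \<le> sqrt (w \<bullet> w + \<epsilon>)"
proof -
  define S where "S = sqrt (w \<bullet> w + \<epsilon>)"
  define S' where "S' = sqrt (w' \<bullet> w' + \<epsilon>)"
  have pS: "S > 0" "S' > 0" using assms by (auto simp: S_def S'_def add_nonneg_pos)
  have S2: "S^2 = w \<bullet> w + \<epsilon>" "S'^2 = w' \<bullet> w' + \<epsilon>" using assms
    by (auto simp: S_def S'_def add_nonneg_pos less_imp_le)
  have key: "\<epsilon> + w' \<bullet> w \<le> S * S'"
  proof (cases "\<epsilon> + w' \<bullet> w \<le> 0")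
    case True then show ?thesis using pS by (smt (verit) mult_pos_pos)
  next
    case False
    have cs: "(w' \<bullet> w)^2 \<le> (w \<bullet> w) * (w' \<bullet> w')"
      by (metis Cauchy_Schwarz_ineq inner_commute)
    have am: "2 * (w' \<bullet> w) \<le> w \<bullet> w + w' \<bullet> w'"
    proof -
      have "0 \<le> (w - w') \<bullet> (w - w')" by simp
      thus ?thesis by (simp add: inner_diff inner_commute)
    qed
    have em: "\<epsilon> * (2 * (w' \<bullet> w)) \<le> \<epsilon> * (w \<bullet> w + w' \<bullet> w')"
      using am assms by (simp add: mult_left_mono)
    have "(\<epsilon> + w' \<bullet> w)^2 = \<epsilon>^2 + \<epsilon> * (2 * (w' \<bullet> w)) + (w' \<bullet> w)^2"
      by (simp add: power2_eq_square algebra_simps)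
    also have "\<dots> \<le> \<epsilon>^2 + \<epsilon> * (w \<bullet> w + w' \<bullet> w') + (w \<bullet> w) * (w' \<bullet> w')"
      using em cs by linarith
    also have "\<dots> = (S * S')^2" unfolding power_mult_distrib S2
      by (simp add: power2_eq_square algebra_simps)
    finally have "(\<epsilon> + w' \<bullet> w)^2 \<le> (S * S')^2" .
    thus ?thesis using pS by (meson mult_pos_pos less_imp_le power2_le_imp_le)
  qed
  have "S' + (w' \<bullet> (w - w')) / S' = (S'^2 + w' \<bullet> w - w' \<bullet> w') / S'"
    using pS by (simp add: field_simps power2_eq_square inner_diff_right)
  also have "\<dots> = (\<epsilon> + w' \<bullet> w) / S'" using S2 by simp
  also have "\<dots> \<le> S" using key pS by (simp add: divide_le_eq)
  finally show ?thesis unfolding S_def S'_def .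
qed
lemma bregman_enet:
  fixes w w' :: "real^'k"
  assumes b: "\<beta> > 0" and a: "\<alpha> > 0" and e: "\<epsilon> > 0" and xi: "\<forall>k. \<xi>$k > 0"
  shows "\<beta>/2 * Min (range (\<lambda>k. \<xi>$k)) * (norm (w - w'))^2 \<le> bregman (enet_col \<beta> \<alpha> \<epsilon> \<xi>) w w'"
proof -
  define d where "d = w - w'"
  define S' where "S' = sqrt (w' \<bullet> w' + \<epsilon>)"
  define T where "T = sqrt (w \<bullet> w + \<epsilon>) - S' - (w' \<bullet> d) / S'"
  define m where "m = Min (range (\<lambda>k. \<xi>$k))"
  have T0: "T \<ge> 0" using sqrt_tangent[OF e, of w' w] unfolding T_def S'_def d_def by simp
  have fd: "frechet_derivative (enet_col \<beta> \<alpha> \<epsilon> \<xi>) (at w') = 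
     (\<lambda>w. \<beta> * (\<Sum>i\<in>UNIV. 2 * (w $ i * (\<xi> $ i * w' $ i))) / 2 +
          \<alpha> * ((w' \<bullet> w + w \<bullet> w') * inverse (sqrt (w' \<bullet> w' + \<epsilon>))) / 2)"
    using frechet_derivative_at[OF enet_deriv[OF e, where \<beta>=\<beta> and \<alpha>=\<alpha> and \<xi>=\<xi> and w'=w']] by simp
  have sq: "(\<Sum>i\<in>UNIV. \<xi>$i * w$i * w$i) - (\<Sum>i\<in>UNIV. \<xi>$i * w'$i * w'$i)
      - (\<Sum>i\<in>UNIV. 2 * (d $ i * (\<xi> $ i * w' $ i))) = (\<Sum>i\<in>UNIV. \<xi>$i * d$i * d$i)"
  proof -
    have "(\<Sum>i\<in>UNIV. \<xi>$i * w$i * w$i) - (\<Sum>i\<in>UNIV. \<xi>$i * w'$i * w'$i)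
      - (\<Sum>i\<in>UNIV. 2 * (d $ i * (\<xi> $ i * w' $ i))) =
      (\<Sum>i\<in>UNIV. \<xi>$i * w$i * w$i - \<xi>$i * w'$i * w'$i - 2 * (d $ i * (\<xi> $ i * w' $ i)))"
      by (simp add: sum_subtractf)
    also have "\<dots> = (\<Sum>i\<in>UNIV. \<xi>$i * d$i * d$i)"
      by (rule sum.cong) (auto simp: d_def algebra_simps)
    finally show ?thesis .
  qed
  have br: "bregman (enet_col \<beta> \<alpha> \<epsilon> \<xi>) w w' = \<beta>/2 * (\<Sum>i\<in>UNIV. \<xi>$i * d$i * d$i) + \<alpha> * T"
  proof -
    have "bregman (enet_col \<beta> \<alpha> \<epsilon> \<xi>) w w' = \<beta>/2 * ((\<Sum>i\<in>UNIV. \<xi>$i * w$i * w$i) - (\<Sum>i\<in>UNIV. \<xi>$i * w'$i * w'$i)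
      - (\<Sum>i\<in>UNIV. 2 * (d $ i * (\<xi> $ i * w' $ i)))) + \<alpha> * T"
    proof -
      have "bregman (enet_col \<beta> \<alpha> \<epsilon> \<xi>) w w' = (\<beta>/2 * (\<Sum>i\<in>UNIV. \<xi>$i * w$i * w$i) + \<alpha> * sqrt (w \<bullet> w + \<epsilon>))
         - (\<beta>/2 * (\<Sum>i\<in>UNIV. \<xi>$i * w'$i * w'$i) + \<alpha> * S')
         - (\<beta> * (\<Sum>i\<in>UNIV. 2 * (d $ i * (\<xi> $ i * w' $ i))) / 2 + \<alpha> * ((w' \<bullet> d + w' \<bullet> d) * inverse S') / 2)"
        unfolding bregman_def fd unfolding S'_def d_def[symmetric] enet_alt
        by (simp only: inner_commute[of d w'])
      also have "\<dots> = \<beta>/2 * ((\<Sum>i\<in>UNIV. \<xi>$i * w$i * w$i) - (\<Sum>i\<in>UNIV. \<xi>$i * w'$i * w'$i)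
      - (\<Sum>i\<in>UNIV. 2 * (d $ i * (\<xi> $ i * w' $ i)))) + \<alpha> * T"
        unfolding T_def divide_inverse by (simp only: algebra_simps) simp
      finally show ?thesis .
    qed
    then show ?thesis using sq by simp
  qed
  have fin: "finite (range (\<lambda>k. \<xi>$k))" by simp
  have mle: "\<And>k. m \<le> \<xi>$k" unfolding m_def using fin by (intro Min_le) auto
  have "m * (norm d)^2 = (\<Sum>i\<in>UNIV. m * d$i * d$i)"
    by (simp add: power2_norm_eq_inner inner_vec_def sum_distrib_left mult.assoc)
  also have "\<dots> \<le> (\<Sum>i\<in>UNIV. \<xi>$i * d$i * d$i)"
    by (rule sum_mono) (simp add: mult.assoc mult_right_mono mle)
  finally have "\<beta>/2 * (m * (norm d)^2) \<le> \<beta>/2 * (\<Sum>i\<in>UNIV. \<xi>$i * d$i * d$i)"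
    using b by simp
  then show ?thesis using br T0 a unfolding m_def d_def
    by (smt (verit) mult.assoc mult_nonneg_nonneg)
qed
lemma comparison:
  fixes V :: "real \<Rightarrow> real"
  assumes a: "a > 0"
    and dv: "\<forall>t\<ge>0. \<exists>D. (V has_real_derivative D) (at t within {0..}) \<and> D \<le> - a * V t + s"
    and t: "t \<ge> 0"
  shows "V t \<le> (V 0 - s/a) * exp (- a * t) + s/a"
proof -
  define \<phi> where "\<phi> = (\<lambda>\<tau>. (V \<tau> - s/a) * exp (a * \<tau>))"
  have d\<phi>: "\<exists>y. (\<phi> has_real_derivative y) (at \<tau> within {0..}) \<and> y \<le> 0" if tau: "\<tau> \<ge> 0" for \<tau>
  proof -
    obtain D where D: "(V has_real_derivative D) (at \<tau> within {0..})" "D \<le> - a * V \<tau> + s"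
      using dv tau by blast
    have "(\<phi> has_real_derivative (D * exp (a * \<tau>) + (V \<tau> - s/a) * (exp (a * \<tau>) * a))) (at \<tau> within {0..})"
      unfolding \<phi>_def
      by (auto intro!: derivative_eq_intros D(1))
    moreover have "D * exp (a * \<tau>) + (V \<tau> - s/a) * (exp (a * \<tau>) * a) = (D + a * V \<tau> - s) * exp (a * \<tau>)"
      using a by (simp add: field_simps)
    moreover have "(D + a * V \<tau> - s) * exp (a * \<tau>) \<le> 0"
      using D(2) by (simp add: mult_nonpos_nonneg)
    ultimately show ?thesis by metis
  qed
  have "\<phi> t \<le> \<phi> 0"
  proof (rule DERIV_nonpos_imp_decreasing_open[OF t])
    fix x assume x: "0 < x" "x < t"
    obtain y where y: "(\<phi> has_real_derivative y) (at x within {0..})" "y \<le> 0" using d\<phi>[of x] x by auto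
    have "(\<phi> has_real_derivative y) (at x within {0<..})"
      by (rule DERIV_subset[OF y(1)]) auto
    then have "(\<phi> has_real_derivative y) (at x)" using at_within_open[of x "{0<..}"] x by simp
    then show "\<exists>y. DERIV \<phi> x :> y \<and> y \<le> 0" using y(2) by blast
  next
    show "continuous_on {0..t} \<phi>"
      unfolding continuous_on_eq_continuous_within
    proof
      fix x assume "x \<in> {0..t}"
      then obtain y where y: "(\<phi> has_real_derivative y) (at x within {0..})" using d\<phi>[of x] by auto
      show "continuous (at x within {0..t}) \<phi>"
        by (rule continuous_within_subset[OF DERIV_continuous[OF y]]) auto
    qed
  qed
  then have "(V t - s/a) * exp (a * t) \<le> V 0 - s/a" by (simp add: \<phi>_def)
  then have "V t - s/a \<le> (V 0 - s/a) * exp (- a * t)"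
    by (simp add: exp_minus field_simps)
  then show ?thesis by simp
qed

lemma norm_sq_columns: "(norm (A::real^'c^'k))^2 = (\<Sum>i\<in>UNIV. (norm (column i A))^2)"
  unfolding power2_norm_eq_inner inner_vec_def column_def
  by (simp add: sum.swap[of _ "UNIV::'k set"])

lemma wsum_lower:
  fixes Ws W :: "real^'c^'k" and \<gamma> :: "real^'c" and \<xi> :: "real^'k"
  assumes g: "\<forall>i. \<gamma>$i > 0" and b: "\<beta> > 0" and a: "\<alpha> > 0" and e: "\<epsilon> > 0" and xi: "\<forall>k. \<xi>$k > 0"
  shows "\<beta> * Min (range (\<lambda>k. \<xi>$k)) / (2 * Max (range (\<lambda>i. \<gamma>$i))) * (norm (Ws - W))^2
     \<le> (\<Sum>i\<in>UNIV. 1 / \<gamma>$i * bregman (enet_col \<beta> \<alpha> \<epsilon> \<xi>) (column i Ws) (column i W))"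
proof -
  define m where "m = Min (range (\<lambda>k. \<xi>$k))"
  define G where "G = Max (range (\<lambda>i. \<gamma>$i))"
  have m0: "m > 0" unfolding m_def using xi by (subst Min_gr_iff) auto
  have Gge: "\<And>i. \<gamma>$i \<le> G" unfolding G_def by (intro Max_ge) auto
  have G0: "G > 0" using Gge[of undefined] g by (meson less_le_trans)
  have "\<beta> * m / (2 * G) * (norm (Ws - W))^2 = (\<Sum>i\<in>UNIV. 1 / G * (\<beta>/2 * m * (norm (column i Ws - column i W))^2))"
  proof -
    have cc: "\<And>i. column i Ws - column i W = column i (Ws - W)"
      by (simp add: column_def vec_eq_iff)
    show ?thesis unfolding cc norm_sq_columns[of "Ws - W"] sum_distrib_left[symmetric]
      by (simp add: field_simps)
  qed
  also have "\<dots> \<le> (\<Sum>i\<in>UNIV. 1 / \<gamma>$i * bregman (enet_col \<beta> \<alpha> \<epsilon> \<xi>) (column i Ws) (column i W))"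
  proof (rule sum_mono)
    fix i
    have B: "\<beta>/2 * m * (norm (column i Ws - column i W))^2 \<le> bregman (enet_col \<beta> \<alpha> \<epsilon> \<xi>) (column i Ws) (column i W)"
      unfolding m_def by (rule bregman_enet[OF b a e xi])
    have B0: "0 \<le> \<beta>/2 * m * (norm (column i Ws - column i W))^2" using b m0 by simp
    have "1 / G \<le> 1 / \<gamma>$i" using g Gge[of i] by (simp add: frac_le)
    then show "1 / G * (\<beta>/2 * m * (norm (column i Ws - column i W))^2) \<le> 1 / \<gamma>$i * bregman (enet_col \<beta> \<alpha> \<epsilon> \<xi>) (column i Ws) (column i W)"
      using B B0 G0 by (meson mult_mono less_imp_le order_trans zero_le_divide_1_iff)
  qed
  finally show ?thesis unfolding m_def G_def .
qed
theorem theorem3: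
  fixes f :: "real^'n \<Rightarrow> real^'n"
    and g gf :: "real^'n \<Rightarrow> real^'m^'n"
    and h :: "real^'n \<Rightarrow> real^'p"
    and L :: "real^'p^'n"
    and M :: "real^'n \<Rightarrow> real^'n^'n"
    and \<phi>a :: "real^'n \<Rightarrow> real^'m \<Rightarrow> real^'na"
    and \<phi>s :: "real^'n \<Rightarrow> real^'m \<Rightarrow> real^'ns"
    and x xh d :: "real \<Rightarrow> real^'n"
    and u fa :: "real \<Rightarrow> real^'m"
    and fs :: "real \<Rightarrow> real^'p"
    and Wa :: "real \<Rightarrow> real^'m^'na" and Wastar :: "real^'m^'na"
    and Ws :: "real \<Rightarrow> real^'p^'ns" and Wsstar :: "real^'p^'ns"
    and \<xi>a :: "real^'na" and \<xi>s :: "real^'ns"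
    and \<gamma>a :: "real^'m" and \<gamma>s :: "real^'p"
    and dbar \<beta>a \<alpha>a \<epsilon>a \<beta>s \<alpha>s \<epsilon>s \<sigma>a \<sigma>s :: real
    and epsa_bar epss_bar L\<phi>a L\<phi>s mlow mup lam \<alpha>V \<sigma> :: real
  assumes smooth:
      "\<forall>z. f differentiable (at z) \<and> g differentiable (at z) \<and> gf differentiable (at z)
            \<and> h differentiable (at z) \<and> M differentiable (at z)"
      "\<forall>z v. (\<lambda>q. \<phi>a (fst q) (snd q)) differentiable (at (z, v))
            \<and> (\<lambda>q. \<phi>s (fst q) (snd q)) differentiable (at (z, v))"
    and dist_bound: "\<forall>t\<ge>0. norm (d t) < dbar"
    and mirror_params: "\<beta>a > 0" "\<alpha>a > 0" "\<epsilon>a > 0" "\<forall>k. \<xi>a $ k > 0"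
      "\<beta>s > 0" "\<alpha>s > 0" "\<epsilon>s > 0" "\<forall>k. \<xi>s $ k > 0"
    and gains: "\<forall>i. \<gamma>a $ i > 0" "\<forall>j. \<gamma>s $ j > 0" "\<sigma>a > 0" "\<sigma>s > 0"
    and plant:
      "\<forall>t\<ge>0. (x has_vector_derivative
                 (f (x t) + g (x t) *v u t + gf (x t) *v fa t + d t)) (at t within {0..})"
    and observer_and_laws:
      "\<forall>t\<ge>0. let r = (h (x t) + fs t) - (h (xh t) + transpose (Ws t) *v \<phi>s (xh t) (u t));
                 z = transpose (g (xh t)) *v (M (xh t) *v (L *v r)) in
         (xh has_vector_derivative
            (f (xh t) + g (xh t) *v u t + g (xh t) *v (transpose (Wa t) *v \<phi>a (xh t) (u t))
             + L *v r)) (at t within {0..})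
       \<and> (Wa has_vector_derivative
            (\<chi> k i. - \<gamma>a $ i * (matrix_inv (hess_block (enet_map \<beta>a \<alpha>a \<epsilon>a \<xi>a) (Wa t) i)
                                    *v \<phi>a (xh t) (u t)) $ k * z $ i
                    - \<sigma>a * Wa t $ k $ i)) (at t within {0..})
       \<and> (Ws has_vector_derivative
            (\<chi> k j. \<gamma>s $ j * (matrix_inv (hess_block (enet_map \<beta>s \<alpha>s \<epsilon>s \<xi>s) (Ws t) j)
                                    *v \<phi>s (xh t) (u t)) $ k * r $ j
                    - \<sigma>s * Ws t $ k $ j)) (at t within {0..})"
    and A1: "\<forall>t\<ge>0. norm (fa t - transpose Wastar *v \<phi>a (x t) (u t)) \<le> epsa_bar"
      "\<forall>t\<ge>0. norm (fs t - transpose Wsstar *v \<phi>s (x t) (u t)) \<le> epss_bar"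
      "\<forall>z1 z2 v. norm (\<phi>a z1 v - \<phi>a z2 v) \<le> L\<phi>a * norm (z1 - z2)"
      "\<forall>z1 z2 v. norm (\<phi>s z1 v - \<phi>s z2 v) \<le> L\<phi>s * norm (z1 - z2)"
    and A2: "\<forall>z. transpose (M z) = M z" "mlow > 0"
      "\<forall>z. psd_le (mlow *\<^sub>R mat 1) (M z) \<and> psd_le (M z) (mup *\<^sub>R mat 1)"
      "lam > 0"
      "\<forall>z w. let A = jacobian f (at z) + (\<Sum>k\<in>UNIV. w $ k *\<^sub>R jacobian (\<lambda>y. column k (g y)) (at z))
                      - L ** jacobian h (at z) in
          psd_le (frechet_derivative M (at z) (f z + g z *v w) + transpose A ** M z + M z ** A)
                 ((- 2 * lam) *\<^sub>R M z)"
    and A3: "\<exists>S U. compact S \<and> compact U \<and> (\<forall>t\<ge>0. x t \<in> S \<and> xh t \<in> S \<and> u t \<in> U)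
              \<and> (\<forall>z\<in>S. \<exists>\<delta>>0. \<exists>C. lipschitz_on C (cball z \<delta> \<inter> S) f
                     \<and> lipschitz_on C (cball z \<delta> \<inter> S) g \<and> lipschitz_on C (cball z \<delta> \<inter> S) h)"
    and Vdot: "\<alpha>V > 0" "\<sigma> > 0"
      "\<forall>t\<ge>0. \<exists>D. ((\<lambda>\<tau>. lyap M (x \<tau> - xh \<tau>) (xh \<tau>)
                     (enet_col \<beta>a \<alpha>a \<epsilon>a \<xi>a) \<gamma>a Wastar (Wa \<tau>)
                     (enet_col \<beta>s \<alpha>s \<epsilon>s \<xi>s) \<gamma>s Wsstar (Ws \<tau>)) has_real_derivative D)
                   (at t within {0..})
              \<and> D \<le> - \<alpha>V * lyap M (x t - xh t) (xh t)
                     (enet_col \<beta>a \<alpha>a \<epsilon>a \<xi>a) \<gamma>a Wastar (Wa t)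
                     (enet_col \<beta>s \<alpha>s \<epsilon>s \<xi>s) \<gamma>s Wsstar (Ws t) + \<sigma>"
  shows "(\<exists>C\<ge>0. \<forall>t\<ge>0. (norm (x t - xh t))\<^sup>2 \<le> C * exp (- \<alpha>V * t) + 2 / mlow * (\<sigma> / \<alpha>V))
       \<and> (\<forall>\<epsilon>>0. \<exists>T\<ge>0. \<forall>t\<ge>T.
            (norm (x t - xh t))\<^sup>2 \<le> 2 / mlow * (\<sigma> / \<alpha>V) + \<epsilon>
          \<and> (norm (Wastar - Wa t))\<^sup>2
              \<le> 2 * Max (range (\<lambda>i. \<gamma>a $ i)) / (\<beta>a * Min (range (\<lambda>k. \<xi>a $ k))) * (\<sigma> / \<alpha>V) + \<epsilon>
          \<and> (norm (Wsstar - Ws t))\<^sup>2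
              \<le> 2 * Max (range (\<lambda>j. \<gamma>s $ j)) / (\<beta>s * Min (range (\<lambda>k. \<xi>s $ k))) * (\<sigma> / \<alpha>V) + \<epsilon>)"
proof -
  define V where "V = (\<lambda>\<tau>. lyap M (x \<tau> - xh \<tau>) (xh \<tau>)
                     (enet_col \<beta>a \<alpha>a \<epsilon>a \<xi>a) \<gamma>a Wastar (Wa \<tau>)
                     (enet_col \<beta>s \<alpha>s \<epsilon>s \<xi>s) \<gamma>s Wsstar (Ws \<tau>))"
  define c where "c = \<sigma> / \<alpha>V"
  define K where "K = \<bar>V 0\<bar>"
  define ka where "ka = \<beta>a * Min (range (\<lambda>k. \<xi>a $ k)) / (2 * Max (range (\<lambda>i. \<gamma>a $ i)))"
  define ks where "ks = \<beta>s * Min (range (\<lambda>k. \<xi>s $ k)) / (2 * Max (range (\<lambda>i. \<gamma>s $ i)))"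
  have c0: "c > 0" using Vdot(1,2) by (simp add: c_def)
  have K0: "K \<ge> 0" by (simp add: K_def)
  have dV: "\<forall>t\<ge>0. \<exists>D. (V has_real_derivative D) (at t within {0..}) \<and> D \<le> - \<alpha>V * V t + \<sigma>"
    using Vdot(3) unfolding V_def .
  have Vb: "V t \<le> K * exp (- \<alpha>V * t) + c" if t: "t \<ge> 0" for t
  proof -
    have "V t \<le> (V 0 - \<sigma>/\<alpha>V) * exp (- \<alpha>V * t) + \<sigma>/\<alpha>V"
      by (rule comparison[OF Vdot(1) dV t])
    also have "(V 0 - \<sigma>/\<alpha>V) * exp (- \<alpha>V * t) \<le> K * exp (- \<alpha>V * t)"
      using c0 unfolding K_def c_def by (intro mult_right_mono) auto
    finally show ?thesis by (simp add: c_def)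
  qed
  have ka0: "ka > 0"
  proof -
    have "Min (range (\<lambda>k. \<xi>a $ k)) > 0" using mirror_params(4) by (subst Min_gr_iff) auto
    moreover have "Max (range (\<lambda>i. \<gamma>a $ i)) > 0"
      using gains(1) Max_ge[of "range (\<lambda>i. \<gamma>a $ i)" "\<gamma>a $ undefined"] by (meson finite rangeI finite_imageI less_le_trans)
    ultimately show ?thesis using mirror_params(1) unfolding ka_def by simp
  qed
  have ks0: "ks > 0"
  proof -
    have "Min (range (\<lambda>k. \<xi>s $ k)) > 0" using mirror_params(8) by (subst Min_gr_iff) auto
    moreover have "Max (range (\<lambda>i. \<gamma>s $ i)) > 0"
      using gains(2) Max_ge[of "range (\<lambda>i. \<gamma>s $ i)" "\<gamma>s $ undefined"] by (meson finite rangeI finite_imageI less_le_trans)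
    ultimately show ?thesis using mirror_params(5) unfolding ks_def by simp
  qed
  have low: "mlow / 2 * (norm (x t - xh t))^2 \<le> V t \<and> ka * (norm (Wastar - Wa t))^2 \<le> V t
      \<and> ks * (norm (Wsstar - Ws t))^2 \<le> V t" for t
  proof -
    define e where "e = x t - xh t"
    have q: "mlow * (norm e)^2 \<le> e \<bullet> (M (xh t) *v e)"
    proof -
      have "e \<bullet> ((mlow *\<^sub>R mat 1) *v e) \<le> e \<bullet> (M (xh t) *v e)"
        using A2(3) unfolding psd_le_def by blast
      moreover have "e \<bullet> ((mlow *\<^sub>R mat 1) *v e) = mlow * (norm e)^2"
        by (simp add: scaleR_matrix_vector_assoc[symmetric] power2_norm_eq_inner)
      ultimately show ?thesis by simp
    qed
    have Sa: "ka * (norm (Wastar - Wa t))^2 \<le> (\<Sum>i\<in>UNIV. 1 / \<gamma>a $ i * bregman (enet_col \<beta>a \<alpha>a \<epsilon>a \<xi>a) (column i Wastar) (column i (Wa t)))"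
      unfolding ka_def by (rule wsum_lower[OF gains(1) mirror_params(1-4)])
    have Ss: "ks * (norm (Wsstar - Ws t))^2 \<le> (\<Sum>i\<in>UNIV. 1 / \<gamma>s $ i * bregman (enet_col \<beta>s \<alpha>s \<epsilon>s \<xi>s) (column i Wsstar) (column i (Ws t)))"
      unfolding ks_def by (rule wsum_lower[OF gains(2) mirror_params(5-8)])
    have Vt: "V t = 1/2 * (e \<bullet> (M (xh t) *v e))
       + (\<Sum>i\<in>UNIV. 1 / \<gamma>a $ i * bregman (enet_col \<beta>a \<alpha>a \<epsilon>a \<xi>a) (column i Wastar) (column i (Wa t)))
       + (\<Sum>i\<in>UNIV. 1 / \<gamma>s $ i * bregman (enet_col \<beta>s \<alpha>s \<epsilon>s \<xi>s) (column i Wsstar) (column i (Ws t)))"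
      unfolding V_def lyap_def e_def by simp
    have n1: "0 \<le> ka * (norm (Wastar - Wa t))^2" using ka0 by simp
    have n2: "0 \<le> ks * (norm (Wsstar - Ws t))^2" using ks0 by simp
    have n3: "0 \<le> mlow * (norm e)^2" using A2(2) by simp
    show ?thesis using q Sa Ss n1 n2 n3 unfolding Vt e_def[symmetric] by linarith
  qed
  have eb: "(norm (x t - xh t))^2 \<le> 2 / mlow * V t" for t
    using low[of t] A2(2) by (simp add: field_simps)
  have wab: "(norm (Wastar - Wa t))^2 \<le> V t / ka" for t
    using low[of t] ka0 by (simp add: field_simps)
  have wsb: "(norm (Wsstar - Ws t))^2 \<le> V t / ks" for t
    using low[of t] ks0 by (simp add: field_simps)
  have inv_ka: "1 / ka = 2 * Max (range (\<lambda>i. \<gamma>a $ i)) / (\<beta>a * Min (range (\<lambda>k. \<xi>a $ k)))"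
    unfolding ka_def by simp
  have inv_ks: "1 / ks = 2 * Max (range (\<lambda>i. \<gamma>s $ i)) / (\<beta>s * Min (range (\<lambda>k. \<xi>s $ k)))"
    unfolding ks_def by simp
  have m0: "mlow > 0" by (rule A2(2))
  show ?thesis
  proof (intro conjI allI impI)
    show "\<exists>C\<ge>0. \<forall>t\<ge>0. (norm (x t - xh t))\<^sup>2 \<le> C * exp (- \<alpha>V * t) + 2 / mlow * (\<sigma> / \<alpha>V)"
    proof (intro exI[of _ "2 / mlow * K"] conjI allI impI)
      show "0 \<le> 2 / mlow * K" using m0 K0 by simp
      fix t :: real assume t: "t \<ge> 0"
      have "(norm (x t - xh t))\<^sup>2 \<le> 2 / mlow * V t" by (rule eb)
      also have "\<dots> \<le> 2 / mlow * (K * exp (- \<alpha>V * t) + c)"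
        using Vb[OF t] m0 by (intro mult_left_mono) auto
      finally show "(norm (x t - xh t))\<^sup>2 \<le> 2 / mlow * K * exp (- \<alpha>V * t) + 2 / mlow * (\<sigma> / \<alpha>V)"
        by (simp add: c_def algebra_simps)
    qed
  next
    fix \<epsilon> :: real assume \<epsilon>: "\<epsilon> > 0"
    define B where "B = 2 / mlow + 1 / ka + 1 / ks"
    have B0: "B > 0" unfolding B_def using m0 ka0 ks0 by (simp add: add_pos_pos)
    define \<delta> where "\<delta> = min 1 (\<epsilon> / (B * K + 1))"
    have BK: "B * K \<ge> 0" using B0 K0 by simp
    have \<delta>0: "\<delta> > 0" unfolding \<delta>_def using \<epsilon> BK by simp
    define T where "T = - ln \<delta> / \<alpha>V"
    have "\<delta> \<le> 1" unfolding \<delta>_def by simp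
    then have "ln \<delta> \<le> 0" using \<delta>0 by simp
    then have T0: "T \<ge> 0" unfolding T_def using Vdot(1) by (simp add: divide_nonpos_pos)
    have small: "B * K * exp (- \<alpha>V * t) \<le> \<epsilon>" if t: "t \<ge> T" for t
    proof -
      have "exp (- \<alpha>V * t) \<le> exp (- \<alpha>V * T)" using t Vdot(1) by simp
      also have "exp (- \<alpha>V * T) = \<delta>" unfolding T_def using Vdot(1) \<delta>0 by simp
      finally have "B * K * exp (- \<alpha>V * t) \<le> B * K * \<delta>" using BK by (intro mult_left_mono) auto
      also have "\<dots> \<le> B * K * (\<epsilon> / (B * K + 1))" using BK by (intro mult_left_mono) (auto simp: \<delta>_def)
      also have "\<dots> \<le> \<epsilon>" using BK \<epsilon> by (simp add: field_simps)
      finally show ?thesis .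
    qed
    show "\<exists>T\<ge>0. \<forall>t\<ge>T.
            (norm (x t - xh t))\<^sup>2 \<le> 2 / mlow * (\<sigma> / \<alpha>V) + \<epsilon>
          \<and> (norm (Wastar - Wa t))\<^sup>2
              \<le> 2 * Max (range (\<lambda>i. \<gamma>a $ i)) / (\<beta>a * Min (range (\<lambda>k. \<xi>a $ k))) * (\<sigma> / \<alpha>V) + \<epsilon>
          \<and> (norm (Wsstar - Ws t))\<^sup>2
              \<le> 2 * Max (range (\<lambda>j. \<gamma>s $ j)) / (\<beta>s * Min (range (\<lambda>k. \<xi>s $ k))) * (\<sigma> / \<alpha>V) + \<epsilon>"
    proof (intro exI[of _ T] conjI allI impI T0)
      fix t assume tT: "T \<le> t"
      have t: "t \<ge> 0" using tT T0 by simp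
      define E where "E = K * exp (- \<alpha>V * t)"
      have E0: "E \<ge> 0" unfolding E_def using K0 by simp
      have VE: "V t \<le> E + c" using Vb[OF t] by (simp add: E_def)
      have BE: "B * E \<le> \<epsilon>" using small[OF tT] by (simp add: E_def mult.assoc)
      have p1: "2 / mlow * E \<le> \<epsilon>" and p2: "1 / ka * E \<le> \<epsilon>" and p3: "1 / ks * E \<le> \<epsilon>"
      proof -
        have "2 / mlow * E \<le> B * E" "1 / ka * E \<le> B * E" "1 / ks * E \<le> B * E"
        proof -
          have i: "0 \<le> 2 / mlow" "0 \<le> 1 / ka" "0 \<le> 1 / ks" using m0 ka0 ks0 by simp_all
          have "2 / mlow \<le> B" "1 / ka \<le> B" "1 / ks \<le> B" unfolding B_def using i by linarith+
          then show "2 / mlow * E \<le> B * E" "1 / ka * E \<le> B * E" "1 / ks * E \<le> B * E"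
            using E0 by (meson mult_right_mono)+
        qed
        then show "2 / mlow * E \<le> \<epsilon>" "1 / ka * E \<le> \<epsilon>" "1 / ks * E \<le> \<epsilon>" using BE by auto
      qed
      have "(norm (x t - xh t))\<^sup>2 \<le> 2 / mlow * V t" by (rule eb)
      also have "\<dots> \<le> 2 / mlow * (E + c)" using VE m0 by (intro mult_left_mono) auto
      finally show "(norm (x t - xh t))\<^sup>2 \<le> 2 / mlow * (\<sigma> / \<alpha>V) + \<epsilon>"
        using p1 unfolding c_def distrib_left by linarith
      have "(norm (Wastar - Wa t))\<^sup>2 \<le> 1 / ka * V t" using wab[of t] by simp
      also have "\<dots> \<le> 1 / ka * (E + c)" using VE ka0 by (intro mult_left_mono) auto
      finally show "(norm (Wastar - Wa t))\<^sup>2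
              \<le> 2 * Max (range (\<lambda>i. \<gamma>a $ i)) / (\<beta>a * Min (range (\<lambda>k. \<xi>a $ k))) * (\<sigma> / \<alpha>V) + \<epsilon>"
        using p2 unfolding inv_ka[symmetric] c_def distrib_left by linarith
      have "(norm (Wsstar - Ws t))\<^sup>2 \<le> 1 / ks * V t" using wsb[of t] by simp
      also have "\<dots> \<le> 1 / ks * (E + c)" using VE ks0 by (intro mult_left_mono) auto
      finally show "(norm (Wsstar - Ws t))\<^sup>2
              \<le> 2 * Max (range (\<lambda>j. \<gamma>s $ j)) / (\<beta>s * Min (range (\<lambda>k. \<xi>s $ k))) * (\<sigma> / \<alpha>V) + \<epsilon>"
        using p3 unfolding inv_ks[symmetric] c_def distrib_left by linarith
    qed
  qed
qed

end
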